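(* In the setting described in the context, assume $0<a<1$ and $b>0$. Then $$\mu_D^\top\hat\mu\ \ge\ p^{a+2b}\{1+o_p(1)\},$$ i.e. there are random variables $\xi_p\to0$ in probability with $P\big(\mu_D^\top\hat\mu\ge p^{a+2b}(1+\xi_p)\big)\to 1$ as $p\to\infty$.
   Context: Setting (NPEB estimator of a sparse mean difference). Let $p\to\infty$ and fix positive integers $n_1,n_2$; set $a_n=(1/n_1+1/n_2)^{-1/2}$ (a fixed positive constant). Fix $0<a<1$ and $b\in\mathbb{R}$, and put $\Delta=p^b$, $p_1=[p^a]$ (integer part), and bandwidth $h=1/\sqrt{\log p}$. Let $Z_1,\dots,Z_p$ be i.i.d. $N(0,1)$ and define $\bar z_{D,i}=\Delta+Z_i/a_n$ for $1\le i\le p_1$ and $\bar z_{D,i}=Z_i/a_n$ for $p_1<i\le p$, so that $\bar z_D\sim N_p(\mu_D,a_n^{-2}I_p)$ with $\mu_D=(\Delta,\dots,\Delta,0,\dots,0)^\top$ (the first $p_1$ entries equal to $\Delta$). With $\phi$ the standard normal density, the nonparametric empirical Bayes (NPEB, kernel / $f$-modeling) estimator $\hat\mu=(\hat\mu_1,\dots,\hat\mu_p)$ of $\mu_D$ is $$\hat\mu_i=\bar z_{D,i}+\frac{1}{h^2}\,\frac{\sum_{j=1}^p(\bar z_{D,j}-\bar z_{D,i})\,\phi\{a_n(\bar z_{D,i}-\bar z_{D,j})/h\}}{\sum_{j=1}^p\phi\{a_n(\bar z_{D,i}-\bar z_{D,j})/h\}},\qquad 1\le i\le p.$$ *)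

theory Defs
  imports "HOL-Probability.Probability"
begin

text \<open>Probability space for dimension p: Z_1,...,Z_p i.i.d. N(0,1), sample point
  omega :: nat => real with Z_i = omega i for 1 <= i <= p.\<close>
definition npeb_space :: "nat \<Rightarrow> (nat \<Rightarrow> real) measure" where
  "npeb_space p = PiM {1..p} (\<lambda>_. density lborel std_normal_density)"

definition npeb_an :: "nat \<Rightarrow> nat \<Rightarrow> real" where
  "npeb_an n1 n2 = (1 / real n1 + 1 / real n2) powr (-1/2)"

definition npeb_p1 :: "real \<Rightarrow> nat \<Rightarrow> nat" where
  "npeb_p1 a p = nat \<lfloor>real p powr a\<rfloor>"

definition npeb_Delta :: "real \<Rightarrow> nat \<Rightarrow> real" where
  "npeb_Delta b p = real p powr b"

definition npeb_h :: "nat \<Rightarrow> real" where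
  "npeb_h p = 1 / sqrt (ln (real p))"

definition npeb_muD :: "real \<Rightarrow> real \<Rightarrow> nat \<Rightarrow> nat \<Rightarrow> real" where
  "npeb_muD a b p i = (if 1 \<le> i \<and> i \<le> npeb_p1 a p then npeb_Delta b p else 0)"

definition npeb_zbar :: "nat \<Rightarrow> nat \<Rightarrow> real \<Rightarrow> real \<Rightarrow> nat \<Rightarrow> (nat \<Rightarrow> real) \<Rightarrow> nat \<Rightarrow> real" where
  "npeb_zbar n1 n2 a b p \<omega> i = npeb_muD a b p i + \<omega> i / npeb_an n1 n2"

definition npeb_muhat :: "nat \<Rightarrow> nat \<Rightarrow> real \<Rightarrow> real \<Rightarrow> nat \<Rightarrow> (nat \<Rightarrow> real) \<Rightarrow> nat \<Rightarrow> real" where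
  "npeb_muhat n1 n2 a b p \<omega> i =
     (let z = npeb_zbar n1 n2 a b p \<omega>; an = npeb_an n1 n2; h = npeb_h p in
      z i + (1 / h\<^sup>2) *
        ((\<Sum>j\<in>{1..p}. (z j - z i) * std_normal_density (an * (z i - z j) / h)) /
         (\<Sum>j\<in>{1..p}. std_normal_density (an * (z i - z j) / h))))"

definition npeb_inner :: "nat \<Rightarrow> nat \<Rightarrow> real \<Rightarrow> real \<Rightarrow> nat \<Rightarrow> (nat \<Rightarrow> real) \<Rightarrow> real" where
  "npeb_inner n1 n2 a b p \<omega> = (\<Sum>i\<in>{1..p}. npeb_muD a b p i * npeb_muhat n1 n2 a b p \<omega> i)"

end

theory Submission
  imports Defs "HOL-Real_Asymp.Real_Asymp"
begin

abbreviation "NN \<equiv> density lborel std_normal_density"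

lemma NN_prob: "prob_space NN"
  by (rule prob_space_normal_density) simp

lemma sp_prob: "prob_space (npeb_space p)"
  unfolding npeb_space_def by (rule prob_space_PiM) (rule NN_prob)

lemma int_abs_NN: "integrable NN (\<lambda>x. \<bar>x\<bar>)"
proof -
  have "integrable lborel (\<lambda>x. std_normal_density x * \<bar>x\<bar>^(2*0+1))"
    using integrable.intros[OF std_normal_moment_abs_odd[of 0]] .
  then have "integrable lborel (\<lambda>x. std_normal_density x *\<^sub>R \<bar>x\<bar>)" by simp
  then show ?thesis
    by (subst integrable_density) auto
qed

definition "mabs = integral\<^sup>L NN (\<lambda>x. \<bar>x\<bar>)"

lemma comp_int:
  assumes "i \<in> {1..p}"
  shows "integrable (npeb_space p) (\<lambda>\<omega>. \<bar>\<omega> i\<bar>)"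
    and "integral\<^sup>L (npeb_space p) (\<lambda>\<omega>. \<bar>\<omega> i\<bar>) = mabs"
proof -
  have d: "distr (npeb_space p) NN (\<lambda>\<omega>. \<omega> i) = NN"
    unfolding npeb_space_def by (rule distr_PiM_component[OF NN_prob assms])
  have m: "(\<lambda>\<omega>. \<omega> i) \<in> measurable (npeb_space p) NN"
    unfolding npeb_space_def using assms by (auto intro: measurable_component_singleton)
  show "integrable (npeb_space p) (\<lambda>\<omega>. \<bar>\<omega> i\<bar>)"
    using integrable_distr_eq[OF m, of abs] d int_abs_NN by simp
  show "integral\<^sup>L (npeb_space p) (\<lambda>\<omega>. \<bar>\<omega> i\<bar>) = mabs"
    using integral_distr[OF m, of abs] d unfolding mabs_def by simp
qed

lemma ker_bound:
  fixes z :: "nat \<Rightarrow> real"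
  assumes J: "finite J" "i \<in> J" and K: "K \<ge> 0" and M: "M \<ge> 0"
    and hM: "\<And>t. t > K \<Longrightarrow> t * std_normal_density (s*t) \<le> M"
  shows "(\<Sum>j\<in>J. (z j - z i) * std_normal_density (s*(z i - z j))) /
         (\<Sum>j\<in>J. std_normal_density (s*(z i - z j))) \<ge> - K - real (card J) * M / std_normal_density 0"
proof -
  define W where "W = (\<Sum>j\<in>J. std_normal_density (s*(z i - z j)))"
  define N where "N = (\<Sum>j\<in>J. (z j - z i) * std_normal_density (s*(z i - z j)))"
  have p0: "std_normal_density 0 > 0" by (simp add: normal_density_pos)
  have "std_normal_density (s*(z i - z i)) \<le> W"
    unfolding W_def by (rule member_le_sum) (use J in auto)
  then have W0: "std_normal_density 0 \<le> W" by simp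
  have tm: "(z j - z i) * std_normal_density (s*(z i - z j)) \<ge> - K * std_normal_density (s*(z i - z j)) - M" for j
  proof (cases "z i - z j > K")
    case True
    from hM[OF True] have "(z i - z j) * std_normal_density (s*(z i - z j)) \<le> M" .
    moreover have "0 \<le> K * std_normal_density (s*(z i - z j))" using K by simp
    ultimately show ?thesis by (simp add: algebra_simps)
  next
    case False
    have "(z i - z j) * std_normal_density (s*(z i - z j)) \<le> K * std_normal_density (s*(z i - z j))"
      using False by (intro mult_right_mono) auto
    then show ?thesis using M by (simp add: algebra_simps)
  qed
  have "N \<ge> (\<Sum>j\<in>J. - K * std_normal_density (s*(z i - z j)) - M)"
    unfolding N_def by (rule sum_mono) (rule tm)
  also have "(\<Sum>j\<in>J. - K * std_normal_density (s*(z i - z j)) - M) = - K * W - real (card J) * M"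
    by (simp add: W_def sum_subtractf sum_distrib_left)
  finally have N1: "N \<ge> - K * W - real (card J) * M" .
  have Wpos: "W > 0" using W0 p0 by linarith
  have "N / W \<ge> (- K * W - real (card J) * M) / W"
    using N1 Wpos by (simp add: divide_right_mono)
  also have "(- K * W - real (card J) * M) / W = - K - real (card J) * M / W"
    using Wpos by (simp add: field_simps)
  also have "real (card J) * M / W \<le> real (card J) * M / std_normal_density 0"
    using W0 p0 M by (intro divide_left_mono) auto
  then have "- K - real (card J) * M / W \<ge> - K - real (card J) * M / std_normal_density 0" by linarith
  finally show ?thesis unfolding N_def W_def by linarith
qed



lemma tail_bound:
  fixes an L K t :: real
  assumes an: "an > 0" and L: "L \<ge> 0" "an^2 * L \<ge> 2" and K: "K \<ge> 1" "an^2 * K^2 \<ge> 2"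
    and t: "t > K"
  shows "t * std_normal_density (an * sqrt L * t) \<le> exp (K^2) / sqrt (2*pi) * exp (- L)"
proof -
  define q where "q = an^2 * L / 2"
  have q1: "q \<ge> 1" using L unfolding q_def by simp
  have sq: "(an * sqrt L * t)^2 = an^2 * L * t^2" using L by (simp add: power_mult_distrib)
  have phi: "std_normal_density (an * sqrt L * t) = 1 / sqrt (2*pi) * exp (- (q * t^2))"
    unfolding std_normal_density_def sq q_def by (simp add: field_simps)
  have t1: "t \<ge> 1" using t K by linarith
  have "t \<le> t^2" using t1 by (simp add: power2_eq_square)
  also have "t^2 \<le> exp (t^2)" using exp_ge_add_one_self[of "t^2"] by linarith
  finally have te: "t \<le> exp (t^2)" .
  have "t * exp (- (q * t^2)) \<le> exp (t^2) * exp (- (q * t^2))"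
    using te by (intro mult_right_mono) auto
  also have "\<dots> = exp (t^2 * (1 - q))" by (simp add: exp_add[symmetric] algebra_simps)
  also have "t^2 * (1 - q) \<le> K^2 * (1 - q)"
  proof -
    have "K^2 \<le> t^2" using K t by (intro power_mono) auto
    then show ?thesis using q1 by (intro mult_right_mono_neg) auto
  qed
  also have "K^2 * (1 - q) \<le> K^2 - L"
  proof -
    have "K^2 * q = (an^2 * K^2) * L / 2" unfolding q_def by (simp add: algebra_simps)
    also have "\<dots> \<ge> 2 * L / 2" using K L by (intro divide_right_mono mult_right_mono) auto
    finally show ?thesis by (simp add: algebra_simps)
  qed
  then have "exp (K^2 * (1 - q)) \<le> exp (K^2 - L)" by simp
  finally have main: "t * exp (- (q * t^2)) \<le> exp (K^2 - L)"
    by (meson exp_le_cancel_iff order_trans order_refl)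
  have "t * std_normal_density (an * sqrt L * t) = (t * exp (- (q * t^2))) / sqrt (2*pi)"
    unfolding phi by simp
  also have "\<dots> \<le> exp (K^2 - L) / sqrt (2*pi)" using main by (intro divide_right_mono) auto
  also have "\<dots> = exp (K^2) / sqrt (2*pi) * exp (- L)" by (simp add: exp_diff exp_minus field_simps)
  finally show ?thesis .
qed


lemma muhat_bound:
  assumes an: "npeb_an n1 n2 > 0" and p: "p \<ge> 2"
    and L: "(npeb_an n1 n2)^2 * ln (real p) \<ge> 2" and K: "K \<ge> 1" "(npeb_an n1 n2)^2 * K^2 \<ge> 2"
    and i: "i \<in> {1..p}"
  shows "npeb_muhat n1 n2 a b p \<omega> i \<ge> npeb_zbar n1 n2 a b p \<omega> i - ln (real p) * (K + exp (K^2))"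
proof -
  define z where "z = npeb_zbar n1 n2 a b p \<omega>"
  define an where "an = npeb_an n1 n2"
  define L where "L = ln (real p)"
  have L0: "L > 0" unfolding L_def using p by simp
  have h: "npeb_h p = 1 / sqrt L" unfolding npeb_h_def L_def ..
  have hh: "1 / (npeb_h p)^2 = L" unfolding h using L0 by (simp add: power_divide)
  have arg: "an * (z i - z j) / npeb_h p = (an * sqrt L) * (z i - z j)" for j
    unfolding h by simp
  define M where "M = exp (K^2) / sqrt (2*pi) * exp (- L)"
  have M0: "M \<ge> 0" unfolding M_def by simp
  have hM: "t * std_normal_density ((an * sqrt L) * t) \<le> M" if "t > K" for t
    unfolding M_def using tail_bound[of an L K t] an L K that L0 unfolding an_def L_def by auto
  have kb: "(\<Sum>j\<in>{1..p}. (z j - z i) * std_normal_density ((an * sqrt L)*(z i - z j))) /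
         (\<Sum>j\<in>{1..p}. std_normal_density ((an * sqrt L)*(z i - z j))) \<ge> - K - real (card {1..p}) * M / std_normal_density 0"
    by (rule ker_bound) (use i K M0 hM in auto)
  have "real (card {1..p}) * M / std_normal_density 0 = real p * exp (- L) * exp (K^2)"
    unfolding M_def by (simp add: std_normal_density_def)
  also have "real p * exp (- L) = 1" unfolding L_def using p by (simp add: exp_minus)
  finally have eq: "real (card {1..p}) * M / std_normal_density 0 = exp (K^2)" by simp
  have "npeb_muhat n1 n2 a b p \<omega> i = z i + L *
        ((\<Sum>j\<in>{1..p}. (z j - z i) * std_normal_density ((an * sqrt L)*(z i - z j))) /
         (\<Sum>j\<in>{1..p}. std_normal_density ((an * sqrt L)*(z i - z j))))"
    unfolding npeb_muhat_def Let_def z_def[symmetric] an_def[symmetric] hh arg ..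
  also have "\<dots> \<ge> z i + L * (- K - exp (K^2))"
    using kb eq L0 by (intro add_left_mono mult_left_mono) auto
  finally show ?thesis unfolding z_def L_def by (simp add: algebra_simps)
qed


lemma p1_le: assumes "p \<ge> 1" "a < 1" shows "npeb_p1 a p \<le> p"
proof -
  have "real p powr a \<le> real p powr 1" using assms by (intro powr_mono) auto
  then have "real p powr a \<le> real p" using assms by simp
  then have "\<lfloor>real p powr a\<rfloor> \<le> int p" by (metis floor_mono floor_of_nat)
  then show ?thesis unfolding npeb_p1_def by simp
qed

lemma p1_real: "real (npeb_p1 a p) = of_int \<lfloor>real p powr a\<rfloor>"
  unfolding npeb_p1_def by simp

lemma inner_bound:
  assumes an: "npeb_an n1 n2 > 0" and p: "p \<ge> 2" and a1: "a < 1"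
    and L: "(npeb_an n1 n2)^2 * ln (real p) \<ge> 2" and K: "K \<ge> 1" "(npeb_an n1 n2)^2 * K^2 \<ge> 2"
  shows "npeb_inner n1 n2 a b p \<omega> \<ge>
     real (npeb_p1 a p) * (npeb_Delta b p)^2
     - npeb_Delta b p / npeb_an n1 n2 * (\<Sum>i\<in>{1..npeb_p1 a p}. \<bar>\<omega> i\<bar>)
     - real (npeb_p1 a p) * npeb_Delta b p * ln (real p) * (K + exp (K^2))"
proof -
  define D where "D = npeb_Delta b p"
  define an where "an = npeb_an n1 n2"
  define p1 where "p1 = npeb_p1 a p"
  define LB where "LB = ln (real p) * (K + exp (K^2))"
  have D0: "D > 0" unfolding D_def npeb_Delta_def using p by simp
  have p1p: "p1 \<le> p" unfolding p1_def using p1_le[of p a] p a1 by simp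
  have muD: "npeb_muD a b p i = (if 1 \<le> i \<and> i \<le> p1 then D else 0)" for i
    unfolding npeb_muD_def D_def p1_def ..
  have "npeb_inner n1 n2 a b p \<omega> \<ge> (\<Sum>i\<in>{1..p}. npeb_muD a b p i * (npeb_muD a b p i - \<bar>\<omega> i\<bar> / an - LB))"
    unfolding npeb_inner_def
  proof (rule sum_mono)
    fix i assume i: "i \<in> {1..p}"
    have mb: "npeb_muhat n1 n2 a b p \<omega> i \<ge> npeb_zbar n1 n2 a b p \<omega> i - LB"
      unfolding LB_def by (rule muhat_bound) (use an p L K i in auto)
    have "npeb_zbar n1 n2 a b p \<omega> i \<ge> npeb_muD a b p i - \<bar>\<omega> i\<bar> / an"
    proof -
      have "- \<bar>\<omega> i\<bar> / an \<le> \<omega> i / an" using an unfolding an_def by (intro divide_right_mono) auto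
      then show ?thesis unfolding npeb_zbar_def an_def by simp
    qed
    with mb have "npeb_muhat n1 n2 a b p \<omega> i \<ge> npeb_muD a b p i - \<bar>\<omega> i\<bar> / an - LB" by linarith
    moreover have "npeb_muD a b p i \<ge> 0" unfolding muD using D0 by simp
    ultimately show "npeb_muD a b p i * (npeb_muD a b p i - \<bar>\<omega> i\<bar> / an - LB)
        \<le> npeb_muD a b p i * npeb_muhat n1 n2 a b p \<omega> i"
      by (intro mult_left_mono) auto
  qed
  also have "(\<Sum>i\<in>{1..p}. npeb_muD a b p i * (npeb_muD a b p i - \<bar>\<omega> i\<bar> / an - LB))
      = (\<Sum>i\<in>{1..p}. if 1 \<le> i \<and> i \<le> p1 then D * (D - \<bar>\<omega> i\<bar> / an - LB) else 0)"
    unfolding muD by (intro sum.cong) auto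
  also have "\<dots> = (\<Sum>i\<in>{x\<in>{1..p}. 1 \<le> x \<and> x \<le> p1}. D * (D - \<bar>\<omega> i\<bar> / an - LB))"
    by (rule sum.inter_filter[symmetric]) simp
  also have "{x\<in>{1..p}. 1 \<le> x \<and> x \<le> p1} = {1..p1}" using p1p by auto
  also have "(\<Sum>i\<in>{1..p1}. D * (D - \<bar>\<omega> i\<bar> / an - LB))
     = real p1 * D^2 - D / an * (\<Sum>i\<in>{1..p1}. \<bar>\<omega> i\<bar>) - real p1 * D * LB"
    by (simp add: sum_subtractf sum.distrib sum_distrib_left sum_divide_distrib algebra_simps power2_eq_square)
  finally show ?thesis unfolding D_def an_def p1_def LB_def by (simp add: algebra_simps)
qed


lemma r_lim: assumes "a > 0" shows "(\<lambda>p. real (npeb_p1 a p) / real p powr a) \<longlonglongrightarrow> 1"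
proof (rule tendsto_sandwich[of "\<lambda>p. 1 - 1 / real p powr a" _ _ "\<lambda>_. 1"])
  have ev: "eventually (\<lambda>p. p \<ge> 1) sequentially" by (rule eventually_ge_at_top)
  show "eventually (\<lambda>p. 1 - 1 / real p powr a \<le> real (npeb_p1 a p) / real p powr a) sequentially"
    using ev
  proof (rule eventually_mono)
    fix p :: nat assume p: "p \<ge> 1"
    have pos: "real p powr a > 0" using p by simp
    have "real p powr a - 1 \<le> real (npeb_p1 a p)" unfolding p1_real by linarith
    then have "(real p powr a - 1) / real p powr a \<le> real (npeb_p1 a p) / real p powr a"
      using pos by (intro divide_right_mono) auto
    moreover have "(real p powr a - 1) / real p powr a = 1 - 1 / real p powr a"
      using pos by (simp add: field_simps)
    ultimately show "1 - 1 / real p powr a \<le> real (npeb_p1 a p) / real p powr a" by simp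
  qed
  show "eventually (\<lambda>p. real (npeb_p1 a p) / real p powr a \<le> 1) sequentially"
    using ev
  proof (rule eventually_mono)
    fix p :: nat assume p: "p \<ge> 1"
    have pos: "real p powr a > 0" using p by simp
    have "real (npeb_p1 a p) \<le> real p powr a" unfolding p1_real by linarith
    then show "real (npeb_p1 a p) / real p powr a \<le> 1"
      using pos by (simp add: field_simps)
  qed
  show "(\<lambda>_. 1::real) \<longlonglongrightarrow> 1" by simp
  show "(\<lambda>p. 1 - 1 / real p powr a) \<longlonglongrightarrow> 1" using assms by real_asymp
qed


theorem mainTheorem8:
  fixes n1 n2 :: nat and a b :: real
  assumes "n1 > 0" and "n2 > 0" and "0 < a" and "a < 1" and "b > 0"
  shows "\<exists>\<xi> :: nat \<Rightarrow> (nat \<Rightarrow> real) \<Rightarrow> real.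
     (\<forall>p. \<xi> p \<in> borel_measurable (npeb_space p)) \<and>
     (\<forall>\<epsilon>>0. (\<lambda>p. measure (npeb_space p) {\<omega> \<in> space (npeb_space p). \<bar>\<xi> p \<omega>\<bar> > \<epsilon>})
                 \<longlonglongrightarrow> 0) \<and>
     (\<lambda>p. measure (npeb_space p)
            {\<omega> \<in> space (npeb_space p).
               npeb_inner n1 n2 a b p \<omega> \<ge> real p powr (a + 2 * b) * (1 + \<xi> p \<omega>)})
       \<longlonglongrightarrow> 1"
proof -
  define an where "an = npeb_an n1 n2"
  have an0: "an > 0"
  proof -
    have "1 / real n1 + 1 / real n2 > 0" using assms by (simp add: add_pos_pos)
    then show ?thesis unfolding an_def npeb_an_def by simp
  qed
  define K :: real where "K = 1 + 2 / an^2"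
  have K1: "K \<ge> 1" unfolding K_def by simp
  have K2: "an^2 * K^2 \<ge> 2"
  proof -
    have "K \<le> K^2" using K1 by (simp add: power2_eq_square)
    moreover have "an^2 * K \<ge> 2" unfolding K_def using an0 by (simp add: field_simps)
    ultimately show ?thesis using an0 by (smt (verit) mult_left_mono zero_le_power2)
  qed
  define B where "B = K + exp (K^2)"
  define P where "P = (\<lambda>p::nat. real p powr (a + 2 * b))"
  define D where "D = (\<lambda>p::nat. npeb_Delta b p)"
  define L where "L = (\<lambda>p::nat. ln (real p))"
  define p1 where "p1 = (\<lambda>p. npeb_p1 a p)"
  define S where "S = (\<lambda>p (\<omega>::nat \<Rightarrow> real). \<Sum>i\<in>{1..min (p1 p) p}. \<bar>\<omega> i\<bar>)"
  define A where "A = (\<lambda>p. (real (p1 p) * (D p)^2 - real (p1 p) * D p * L p * B) / P p - 1)"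
  define C where "C = (\<lambda>p. D p / (an * P p))"
  define \<xi> where "\<xi> = (\<lambda>p \<omega>. A p - C p * S p \<omega>)"
  have evN: "eventually (\<lambda>p. p \<ge> 2 \<and> an^2 * ln (real p) \<ge> 2) sequentially"
  proof -
    have "filterlim (\<lambda>p::nat. ln (real p)) at_top sequentially" by real_asymp
    then have "eventually (\<lambda>p. ln (real p) \<ge> 2 / an^2) sequentially"
      by (simp add: filterlim_at_top)
    then have "eventually (\<lambda>p. an^2 * ln (real p) \<ge> 2) sequentially"
      by eventually_elim (use an0 in \<open>simp add: field_simps\<close>)
    then show ?thesis using eventually_ge_at_top[of 2] by eventually_elim auto
  qed
  have comp: "\<And>p i. i \<in> {1..min (p1 p) p} \<Longrightarrow> integrable (npeb_space p) (\<lambda>\<omega>. \<bar>\<omega> i\<bar>)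
      \<and> integral\<^sup>L (npeb_space p) (\<lambda>\<omega>. \<bar>\<omega> i\<bar>) = mabs"
    using comp_int by auto
  have intS: "integrable (npeb_space p) (S p)" for p
    unfolding S_def by (rule Bochner_Integration.integrable_sum[where f="\<lambda>i \<omega>. \<bar>\<omega> i\<bar>"]) (use comp in auto)
  have intgS: "integral\<^sup>L (npeb_space p) (S p) = real (min (p1 p) p) * mabs" for p
    unfolding S_def by (subst Bochner_Integration.integral_sum[where f="\<lambda>i \<omega>. \<bar>\<omega> i\<bar>"]) (use comp in auto)
  have measS: "S p \<in> borel_measurable (npeb_space p)" for p
    using intS by (rule borel_measurable_integrable)
  have S0: "S p \<omega> \<ge> 0" for p \<omega> unfolding S_def by (simp add: sum_nonneg)
  have P_eq: "P p = real p powr a * D p * D p" if "p \<ge> 1" for p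
    unfolding P_def D_def npeb_Delta_def using that by (simp add: powr_add[symmetric] algebra_simps)
  have Dpos: "D p > 0" if "p \<ge> 1" for p unfolding D_def npeb_Delta_def using that by simp
  have Ppos: "P p > 0" if "p \<ge> 1" for p unfolding P_def using that by simp
  have A_lim: "A \<longlonglongrightarrow> 0"
  proof -
    have l1: "(\<lambda>p. L p / D p) \<longlonglongrightarrow> 0" unfolding L_def D_def npeb_Delta_def
      using assms by real_asymp
    have "(\<lambda>p. real (p1 p) / real p powr a * (1 - B * (L p / D p)) - 1) \<longlonglongrightarrow> 1 * (1 - B * 0) - 1"
      unfolding p1_def by (intro tendsto_intros r_lim l1 assms)
    then have l2: "(\<lambda>p. real (p1 p) / real p powr a * (1 - B * (L p / D p)) - 1) \<longlonglongrightarrow> 0" by simp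
    have "eventually (\<lambda>p. real (p1 p) / real p powr a * (1 - B * (L p / D p)) - 1 = A p) sequentially"
      using eventually_ge_at_top[of 1]
    proof eventually_elim
      case (elim p)
      have "real p powr a > 0" using elim by simp
      then show ?case unfolding A_def P_eq[OF elim] using Dpos[OF elim]
        by (simp add: field_simps power2_eq_square)
    qed
    from Lim_transform_eventually[OF l2 this] show ?thesis by simp
  qed
  have C_lim: "(\<lambda>p. C p * real (min (p1 p) p) * mabs) \<longlonglongrightarrow> 0"
  proof -
    have "(\<lambda>p. C p * real (min (p1 p) p)) \<longlonglongrightarrow> 0"
    proof (rule tendsto_sandwich[of "\<lambda>_. 0" _ _ "\<lambda>p. (1/an) * (1 / real p powr b)"])
      show "eventually (\<lambda>p. 0 \<le> C p * real (min (p1 p) p)) sequentially"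
        using eventually_ge_at_top[of 1]
      proof eventually_elim
        case (elim p)
        then show ?case using an0 Dpos[OF elim] Ppos[OF elim] unfolding C_def
          by (intro mult_nonneg_nonneg divide_nonneg_pos) auto
      qed
      show "eventually (\<lambda>p. C p * real (min (p1 p) p) \<le> (1/an) * (1 / real p powr b)) sequentially"
        using eventually_ge_at_top[of 1]
      proof eventually_elim
        case (elim p)
        have pa: "real p powr a > 0" using elim by simp
        have "real (min (p1 p) p) \<le> real p powr a"
          unfolding p1_def using p1_real[of a p] by linarith
        then have "C p * real (min (p1 p) p) \<le> C p * real p powr a"
          using Dpos[OF elim] Ppos[OF elim] an0 unfolding C_def by (intro mult_left_mono) auto
        also have "\<dots> = (1/an) * (1 / D p)"
          unfolding C_def P_eq[OF elim] using pa Dpos[OF elim] an0 by (simp add: field_simps)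
        also have "D p = real p powr b" unfolding D_def npeb_Delta_def ..
        finally show ?case .
      qed
      show "(\<lambda>_. 0::real) \<longlonglongrightarrow> 0" by simp
      have "(\<lambda>p::nat. 1 / real p powr b) \<longlonglongrightarrow> 0" using assms by real_asymp
      then show "(\<lambda>p. (1/an) * (1 / real p powr b)) \<longlonglongrightarrow> 0"
        by (rule tendsto_mult_right_zero)
    qed
    then show ?thesis by (rule tendsto_mult_left_zero)
  qed
  show ?thesis
  proof (intro exI conjI allI impI)
    fix p
    show "\<xi> p \<in> borel_measurable (npeb_space p)"
      unfolding \<xi>_def using measS[of p] by measurable
  next
    fix \<epsilon> :: real assume e: "\<epsilon> > 0"
    interpret ps: prob_space "npeb_space p" for p by (rule sp_prob)
    show "(\<lambda>p. measure (npeb_space p) {\<omega> \<in> space (npeb_space p). \<bar>\<xi> p \<omega>\<bar> > \<epsilon>}) \<longlonglongrightarrow> 0"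
    proof (rule tendsto_sandwich[of "\<lambda>_. 0" _ _ "\<lambda>p. C p * real (min (p1 p) p) * mabs / (\<epsilon>/2)"])
      show "eventually (\<lambda>p. 0 \<le> measure (npeb_space p) {\<omega> \<in> space (npeb_space p). \<bar>\<xi> p \<omega>\<bar> > \<epsilon>}) sequentially"
        by simp
      have evA: "eventually (\<lambda>p. \<bar>A p\<bar> < \<epsilon>/2) sequentially"
      proof -
        have "\<forall>e>0. eventually (\<lambda>x. \<bar>A x\<bar> < e) sequentially"
          using A_lim by (simp add: tendsto_iff dist_real_def)
        then show ?thesis using e by (metis half_gt_zero)
      qed
      show "eventually (\<lambda>p. measure (npeb_space p) {\<omega> \<in> space (npeb_space p). \<bar>\<xi> p \<omega>\<bar> > \<epsilon>}
              \<le> C p * real (min (p1 p) p) * mabs / (\<epsilon>/2)) sequentially"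
        using evA eventually_ge_at_top[of 1]
      proof eventually_elim
        case (elim p)
        have C0: "C p \<ge> 0" unfolding C_def using Dpos[OF elim(2)] Ppos[OF elim(2)] an0 by simp
        have sub: "{\<omega> \<in> space (npeb_space p). \<bar>\<xi> p \<omega>\<bar> > \<epsilon>} \<subseteq> {\<omega> \<in> space (npeb_space p). C p * S p \<omega> \<ge> \<epsilon>/2}"
        proof safe
          fix \<omega> assume "\<bar>\<xi> p \<omega>\<bar> > \<epsilon>"
          moreover have "C p * S p \<omega> \<ge> 0" using C0 S0 by simp
          ultimately show "C p * S p \<omega> \<ge> \<epsilon>/2" using elim(1) unfolding \<xi>_def by linarith
        qed
        have "measure (npeb_space p) {\<omega> \<in> space (npeb_space p). \<bar>\<xi> p \<omega>\<bar> > \<epsilon>}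
            \<le> measure (npeb_space p) {\<omega> \<in> space (npeb_space p). C p * S p \<omega> \<ge> \<epsilon>/2}"
          by (rule ps.finite_measure_mono[OF sub]) (use measS in measurable)
        also have "\<dots> \<le> integral\<^sup>L (npeb_space p) (\<lambda>\<omega>. C p * S p \<omega>) / (\<epsilon>/2)"
          by (rule integral_Markov_inequality_measure[where A="space (npeb_space p)"])
             (use intS C0 S0 e in auto)
        also have "integral\<^sup>L (npeb_space p) (\<lambda>\<omega>. C p * S p \<omega>) = C p * real (min (p1 p) p) * mabs"
          using intgS by simp
        finally show ?case .
      qed
      show "(\<lambda>_. 0::real) \<longlonglongrightarrow> 0" by simp
      show "(\<lambda>p. C p * real (min (p1 p) p) * mabs / (\<epsilon>/2)) \<longlonglongrightarrow> 0"
        using tendsto_divide_zero[OF C_lim, of "\<epsilon>/2"] by simp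
    qed
  next
    interpret ps: prob_space "npeb_space p" for p by (rule sp_prob)
    show "(\<lambda>p. measure (npeb_space p)
            {\<omega> \<in> space (npeb_space p).
               npeb_inner n1 n2 a b p \<omega> \<ge> real p powr (a + 2 * b) * (1 + \<xi> p \<omega>)}) \<longlonglongrightarrow> 1"
    proof (rule tendsto_eventually)
      show "eventually (\<lambda>p. measure (npeb_space p)
            {\<omega> \<in> space (npeb_space p).
               npeb_inner n1 n2 a b p \<omega> \<ge> real p powr (a + 2 * b) * (1 + \<xi> p \<omega>)} = 1) sequentially"
        using evN
      proof eventually_elim
        case (elim p)
        have p1: "p \<ge> 1" using elim by simp
        have mn: "min (p1 p) p = p1 p" unfolding p1_def using p1_le[of p a] p1 assms by simp
        have "npeb_inner n1 n2 a b p \<omega> \<ge> real p powr (a + 2 * b) * (1 + \<xi> p \<omega>)" for \<omega>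
        proof -
          have ib: "npeb_inner n1 n2 a b p \<omega> \<ge>
             real (p1 p) * (D p)^2 - D p / an * S p \<omega> - real (p1 p) * D p * L p * B"
            using inner_bound[of n1 n2 p a K b \<omega>] an0 elim K1 K2 assms
            unfolding an_def p1_def D_def L_def B_def S_def mn[unfolded p1_def] by auto
          have "real p powr (a + 2 * b) * (1 + \<xi> p \<omega>)
              = real (p1 p) * (D p)^2 - D p / an * S p \<omega> - real (p1 p) * D p * L p * B"
          proof -
            have pp: "real p powr (a + 2 * b) = P p" unfolding P_def ..
            show ?thesis unfolding pp \<xi>_def A_def C_def using Ppos[OF p1] an0
              by (simp add: field_simps)
          qed
          then show ?thesis using ib by simp
        qed
        then have "{\<omega> \<in> space (npeb_space p).
               npeb_inner n1 n2 a b p \<omega> \<ge> real p powr (a + 2 * b) * (1 + \<xi> p \<omega>)} = space (npeb_space p)"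
          by auto
        then show ?case by (simp add: ps.prob_space)
      qed
    qed
  qed
qed

end
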